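(* Let $k\in\{-1,0,1\}$, $\beta>0$, let $\delta_k>0$ be the positive real solution of $\delta^3+k\delta-\frac{3\beta}{2}=0$, and let $R_b>0$ (with $R_b<1$ if $k=1$). Define \[ R_{\mathrm{AH}}=\frac{1}{\sqrt{\delta_k^2+k}},\quad C_k=\frac{1}{\sqrt{1-kR_b^2}+\delta_kR_b},\quad x_\Sigma=\frac{R_b\delta_k}{C_k},\quad \lambda_1=\frac{\beta R_b^3}{C_k},\quad \lambda_2=\frac{\beta C_k^2}{2\delta_k^3}, \] $h(x)=1-\frac{\lambda_1}{x}-\lambda_2x^2$, $B(u,r)=h(r/u)$, and consider the metric \[ g_{\mathrm{ext}}=-B(u,r)\,du^2-2\,du\,dr+r^2d\Omega^2,\qquad u>0,\ r>x_\Sigma u. \] Then there exists $x_*>x_\Sigma$ such that the hypersurface $r=xu$ is spacelike for $x>x_*$, null for $x=x_*$ and timelike for $x_\Sigma<x<x_*$. If $R_b<R_{\mathrm{AH}}$ and $x_{\mathrm{AH}}>x_\Sigma$ denotes the value with $h(x_{\mathrm{AH}})=0$ (the exterior apparent horizon $r=x_{\mathrm{AH}}u$), then $x_*>x_{\mathrm{AH}}$. Moreover, the curve $r=x_*u$ is an ingoing radial null geodesic (a solution of $\frac{dr}{du}=-\frac12B(u,r)$), and every solution $r(u)$ of $\frac{dr}{du}=-\frac12B(u,r)$ with $r(u_0)<x_*u_0$ for some $u_0>0$ reaches the matching surface $r=x_\Sigma u$ at some finite $u>u_0$; consequently every ingoing radial null geodesic escaping to null infinity other than $r=x_*u$ satisfies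 $r(u)>x_*u$ for all $u>0$, i.e. $r=x_*u$ is the first ingoing radial null geodesic that escapes to null infinity.
   Context: This is the exterior (outgoing Vaidya type metric with mass $M(u)=\lambda_1u/2$ and cosmological scalar field $\Lambda(u)=3\lambda_2/u^2$) of the self-similar stellar model whose interior is $-dt^2+(\delta_kt)^2\big(\frac{dR^2}{1-kR^2}+R^2d\Omega^2\big)$, with matching surface $R=R_b$ in the interior and $r=x_\Sigma u$ in the exterior. The curves $r=xu$ are the homothetic curves. $d\Omega^2=d\theta^2+\sin^2\theta\,d\psi^2$. *)

theory Defs
  imports "HOL-Analysis.Analysis"
begin

definition C_k :: "real \<Rightarrow> real \<Rightarrow> real \<Rightarrow> real" where
  "C_k k \<delta> Rb = 1 / (sqrt (1 - k * Rb\<^sup>2) + \<delta> * Rb)"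

definition x_Sigma :: "real \<Rightarrow> real \<Rightarrow> real \<Rightarrow> real" where
  "x_Sigma k \<delta> Rb = Rb * \<delta> / C_k k \<delta> Rb"

definition lambda1 :: "real \<Rightarrow> real \<Rightarrow> real \<Rightarrow> real \<Rightarrow> real" where
  "lambda1 k \<beta> \<delta> Rb = \<beta> * Rb ^ 3 / C_k k \<delta> Rb"

definition lambda2 :: "real \<Rightarrow> real \<Rightarrow> real \<Rightarrow> real \<Rightarrow> real" where
  "lambda2 k \<beta> \<delta> Rb = \<beta> * (C_k k \<delta> Rb)\<^sup>2 / (2 * \<delta> ^ 3)"

definition R_AH :: "real \<Rightarrow> real \<Rightarrow> real" where
  "R_AH k \<delta> = 1 / sqrt (\<delta>\<^sup>2 + k)"

definition hfun :: "real \<Rightarrow> real \<Rightarrow> real \<Rightarrow> real" where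
  "hfun l1 l2 x = 1 - l1 / x - l2 * x\<^sup>2"

definition B_ext :: "real \<Rightarrow> real \<Rightarrow> real \<Rightarrow> real \<Rightarrow> real" where
  "B_ext l1 l2 u r = hfun l1 l2 (r / u)"

text \<open>Coordinates (u, r, theta, psi); tangent vectors in the coordinate basis.
  The exterior metric g = -B du^2 - 2 du dr + r^2 (dtheta^2 + sin^2 theta dpsi^2)
  as a bilinear form at point p.\<close>

type_synonym vec4 = "real \<times> real \<times> real \<times> real"

definition gext :: "(real \<Rightarrow> real \<Rightarrow> real) \<Rightarrow> vec4 \<Rightarrow> vec4 \<Rightarrow> vec4 \<Rightarrow> real" where
  "gext B p V W = (case p of (u, r, th, ps) \<Rightarrow> case V of (a, b, c, d) \<Rightarrow>
      case W of (a', b', c', d') \<Rightarrow>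
        - B u r * a * a' - (a * b' + b * a') + r\<^sup>2 * (c * c' + (sin th)\<^sup>2 * d * d'))"

text \<open>Tangent space of the hypersurface r = x u (kernel of d(r - x u)).\<close>

definition homothetic_tangent :: "real \<Rightarrow> vec4 set" where
  "homothetic_tangent x = {(a, b, c, d). b = x * a}"

definition hs_spacelike :: "(vec4 \<Rightarrow> vec4 \<Rightarrow> vec4 \<Rightarrow> real) \<Rightarrow> vec4 \<Rightarrow> vec4 set \<Rightarrow> bool" where
  "hs_spacelike g p T \<longleftrightarrow> (\<forall>V\<in>T. V \<noteq> 0 \<longrightarrow> g p V V > 0)"

definition hs_null :: "(vec4 \<Rightarrow> vec4 \<Rightarrow> vec4 \<Rightarrow> real) \<Rightarrow> vec4 \<Rightarrow> vec4 set \<Rightarrow> bool" where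
  "hs_null g p T \<longleftrightarrow> (\<exists>V\<in>T. V \<noteq> 0 \<and> (\<forall>W\<in>T. g p V W = 0))"

definition hs_timelike :: "(vec4 \<Rightarrow> vec4 \<Rightarrow> vec4 \<Rightarrow> real) \<Rightarrow> vec4 \<Rightarrow> vec4 set \<Rightarrow> bool" where
  "hs_timelike g p T \<longleftrightarrow> \<not> hs_null g p T \<and> (\<exists>V\<in>T. g p V V < 0)"

definition homothetic_points :: "real \<Rightarrow> vec4 set" where
  "homothetic_points x = {(u, x * u, th, ps) | u th ps. u > 0 \<and> 0 < th \<and> th < pi}"

definition ingoing_null_ode :: "(real \<Rightarrow> real \<Rightarrow> real) \<Rightarrow> (real \<Rightarrow> real) \<Rightarrow> real \<Rightarrow> real set \<Rightarrow> bool" where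
  "ingoing_null_ode B r u S \<longleftrightarrow> (r has_real_derivative (- B u (r u) / 2)) (at u within S)"

end

theory Submission imports Defs begin

definition Fz :: "real \<Rightarrow> real \<Rightarrow> real \<Rightarrow> real" where
  "Fz l1 l2 x = - hfun l1 l2 x - 2 * x"

lemma Fz_conv:
  assumes "l1 \<ge> 0" "l2 \<ge> 0" "0 < a" "a < b" "b < c"
  shows "(c - a) * Fz l1 l2 b \<le> (c - b) * Fz l1 l2 a + (b - a) * Fz l1 l2 c"
proof -
  have sq: "(c - a) * b\<^sup>2 \<le> (c - b) * a\<^sup>2 + (b - a) * c\<^sup>2"
  proof -
    have "(c - b) * a\<^sup>2 + (b - a) * c\<^sup>2 - (c - a) * b\<^sup>2 = (c-b)*(b-a)*(c-a)"
      by (simp add: power2_eq_square algebra_simps)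
    moreover have "(c-b)*(b-a)*(c-a) \<ge> 0" using assms by simp
    ultimately show ?thesis by linarith
  qed
  have inv: "(c - a) / b \<le> (c - b) / a + (b - a) / c"
  proof -
    have "(c - b) / a + (b - a) / c - (c - a) / b = (c-b)*(b-a)*(c-a) / (a*b*c)"
      using assms by (simp add: field_simps)
    moreover have "(c-b)*(b-a)*(c-a) / (a*b*c) \<ge> 0" using assms by simp
    ultimately show ?thesis by linarith
  qed
  have "(c - a) * Fz l1 l2 b = -(c-a) + l1 * ((c-a)/b) + l2 * ((c-a)*b\<^sup>2) - 2*((c-a)*b)"
    unfolding Fz_def hfun_def by (simp add: algebra_simps)
  also have "\<dots> \<le> -(c-a) + l1 * ((c - b) / a + (b - a) / c) + l2 * ((c - b) * a\<^sup>2 + (b - a) * c\<^sup>2) - 2*((c-a)*b)"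
    using sq inv assms by (intro add_mono diff_mono mult_left_mono order_refl) auto
  also have "\<dots> = (c - b) * Fz l1 l2 a + (b - a) * Fz l1 l2 c"
    unfolding Fz_def hfun_def using assms by (simp add: field_simps)
  finally show ?thesis .
qed


lemma Fz_cont: "continuous_on {a..b} (Fz l1 l2)" if "a > 0"
  using that unfolding Fz_def hfun_def
  by (intro continuous_intros) auto

lemma Fz_root:
  assumes l1: "l1 \<ge> 0" and l2: "l2 > 0" and a: "a > 0" and Fa: "Fz l1 l2 a < 0"
  shows "\<exists>xs>a. Fz l1 l2 xs = 0 \<and> (\<forall>x>xs. Fz l1 l2 x > 0) \<and> (\<forall>x. a < x \<and> x < xs \<longrightarrow> Fz l1 l2 x < 0)"
proof -
  define M where "M = a + 3 / l2 + 1"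
  have "3 / l2 > 0" using l2 by simp
  hence M1: "M > 1" "M > a" using a unfolding M_def by linarith+
  have "l2 * M \<ge> 3" using l2 a unfolding M_def by (simp add: algebra_simps)
  hence "l2 * M\<^sup>2 - 2 * M \<ge> M" using M1 by (simp add: power2_eq_square)
  moreover have "l1 / M \<ge> 0" using l1 M1 by simp
  ultimately have FM: "Fz l1 l2 M > 0" unfolding Fz_def hfun_def using M1 by linarith
  obtain xs where xs: "a \<le> xs" "xs \<le> M" "Fz l1 l2 xs = 0"
    using IVT'[of "Fz l1 l2" a 0 M] Fa FM M1 Fz_cont[OF a] by auto
  have xa: "xs > a" using xs Fa by (cases "xs = a") auto
  show ?thesis
  proof (intro exI[of _ xs] conjI allI impI xa xs(3))
    fix x assume x: "x > xs"
    have "(x - a) * Fz l1 l2 xs \<le> (x - xs) * Fz l1 l2 a + (xs - a) * Fz l1 l2 x"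
      using Fz_conv[OF l1 _ a xa x] l2 by simp
    hence "(xs - a) * Fz l1 l2 x \<ge> - ((x - xs) * Fz l1 l2 a)" using xs by simp
    moreover have "(x - xs) * Fz l1 l2 a < 0" using x Fa by (simp add: mult_pos_neg)
    ultimately have "(xs - a) * Fz l1 l2 x > 0" by linarith
    thus "Fz l1 l2 x > 0" using xa by (simp add: zero_less_mult_iff)
  next
    fix x assume x: "a < x \<and> x < xs"
    have "(xs - a) * Fz l1 l2 x \<le> (xs - x) * Fz l1 l2 a + (x - a) * Fz l1 l2 xs"
      using Fz_conv[OF l1 _ a] x l2 by simp
    moreover have "(xs - x) * Fz l1 l2 a < 0" using x Fa by (simp add: mult_pos_neg)
    ultimately have "(xs - a) * Fz l1 l2 x < 0" using xs by simp
    thus "Fz l1 l2 x < 0" using xa by (simp add: mult_less_0_iff)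
  qed
qed

lemma Fz_bound:
  assumes l1: "l1 \<ge> 0" and l2: "l2 \<ge> 0" and a: "a > 0" "a \<le> y" "y \<le> c"
  shows "Fz l1 l2 y \<le> max (Fz l1 l2 a) (Fz l1 l2 c)"
proof (cases "a < y \<and> y < c")
  case True
  hence "(c - a) * Fz l1 l2 y \<le> (c - y) * Fz l1 l2 a + (y - a) * Fz l1 l2 c"
    using Fz_conv[OF l1 l2 a(1)] by simp
  also have "\<dots> \<le> (c - y) * max (Fz l1 l2 a) (Fz l1 l2 c) + (y - a) * max (Fz l1 l2 a) (Fz l1 l2 c)"
    using True by (intro add_mono mult_left_mono) auto
  also have "\<dots> = (c - a) * max (Fz l1 l2 a) (Fz l1 l2 c)" by (simp add: algebra_simps)
  finally show ?thesis using True by simp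
next
  case False
  hence "y = a \<or> y = c" using a by auto
  thus ?thesis by auto
qed

lemma gext_hom:
  assumes "u > 0"
  shows "gext (B_ext l1 l2) (u, x*u, th, ps) (a, x*a, c, d) (a', x*a', c', d')
     = Fz l1 l2 x * a * a' + (x*u)\<^sup>2 * (c*c' + (sin th)\<^sup>2 * d * d')"
  using assms unfolding gext_def B_ext_def Fz_def by (simp add: algebra_simps)

lemma causal:
  assumes x: "x > 0" and p: "p \<in> homothetic_points x"
  shows "Fz l1 l2 x > 0 \<Longrightarrow> hs_spacelike (gext (B_ext l1 l2)) p (homothetic_tangent x)"
    and "Fz l1 l2 x = 0 \<Longrightarrow> hs_null (gext (B_ext l1 l2)) p (homothetic_tangent x)"
    and "Fz l1 l2 x < 0 \<Longrightarrow> hs_timelike (gext (B_ext l1 l2)) p (homothetic_tangent x)"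
proof -
  obtain u th ps where p': "p = (u, x*u, th, ps)" "u > 0" "0 < th" "th < pi"
    using p unfolding homothetic_points_def by auto
  have s: "sin th > 0" using p' by (simp add: sin_gt_zero)
  have r: "(x*u)\<^sup>2 > 0" using x p' by simp
  have g: "\<And>a c d a' c' d'. gext (B_ext l1 l2) p (a, x*a, c, d) (a', x*a', c', d')
     = Fz l1 l2 x * a * a' + (x*u)\<^sup>2 * (c*c' + (sin th)\<^sup>2 * d * d')"
    using gext_hom[OF p'(2)] p'(1) by simp
  {
    assume F: "Fz l1 l2 x > 0"
    show "hs_spacelike (gext (B_ext l1 l2)) p (homothetic_tangent x)"
      unfolding hs_spacelike_def homothetic_tangent_def
    proof (intro ballI impI)
      fix V :: vec4 assume V0: "V \<in> {(a, b, c, d). b = x * a}" "V \<noteq> 0"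
      obtain a b c d where Vd: "V = (a, b, c, d)" by (cases V) auto
      have V: "(a, b, c, d) \<in> {(a, b, c, d). b = x * a}" "(a, b, c, d) \<noteq> 0" using V0 Vd by auto
      hence b: "b = x * a" by simp
      have "a \<noteq> 0 \<or> c \<noteq> 0 \<or> d \<noteq> 0" using V b by (auto simp: zero_prod_def)
      moreover have "Fz l1 l2 x * a * a \<ge> 0" using F by (metis mult.assoc mult_nonneg_nonneg less_imp_le zero_le_square)
      have eq: "c * c + (sin th)\<^sup>2 * d * d = c\<^sup>2 + (sin th * d)\<^sup>2" by (simp add: power2_eq_square algebra_simps)
      moreover have "c * c + (sin th)\<^sup>2 * d * d \<ge> 0" unfolding eq by simp
      moreover have "a \<noteq> 0 \<Longrightarrow> Fz l1 l2 x * a * a > 0" using F by (metis mult.assoc mult_pos_pos not_real_square_gt_zero)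
      moreover have "c \<noteq> 0 \<or> d \<noteq> 0 \<Longrightarrow> c * c + (sin th)\<^sup>2 * d * d > 0"
        using s unfolding eq by (auto intro: add_pos_nonneg add_nonneg_pos)
      ultimately have "Fz l1 l2 x * a * a + (x*u)\<^sup>2 * (c*c + (sin th)\<^sup>2 * d * d) > 0"
        using r by (smt (verit) mult_pos_pos zero_le_mult_iff)
      thus "gext (B_ext l1 l2) p V V > 0" using g b Vd by simp
    qed
  }
  {
    assume F: "Fz l1 l2 x = 0"
    show "hs_null (gext (B_ext l1 l2)) p (homothetic_tangent x)"
      unfolding hs_null_def homothetic_tangent_def
      using g[of 1 0 0, simplified] F by (intro bexI[of _ "(1, x*1, 0, 0)"]) (auto simp: zero_prod_def)
  }
  {
    assume F: "Fz l1 l2 x < 0"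
    have nn: "\<not> hs_null (gext (B_ext l1 l2)) p (homothetic_tangent x)"
    proof
      assume "hs_null (gext (B_ext l1 l2)) p (homothetic_tangent x)"
      then obtain a b c d where V: "b = x * a" "(a, b, c, d) \<noteq> 0"
        and W: "\<And>W. W \<in> homothetic_tangent x \<Longrightarrow> gext (B_ext l1 l2) p (a, b, c, d) W = 0"
        unfolding hs_null_def homothetic_tangent_def by auto
      have "gext (B_ext l1 l2) p (a, x*a, c, d) (1, x*1, 0, 0) = 0"
        using W[of "(1, x*1, 0, 0)"] V by (simp add: homothetic_tangent_def)
      hence a: "a = 0" using F g[of a c d 1 0 0] by simp
      have "gext (B_ext l1 l2) p (a, x*a, c, d) (0, x*0, 1, 0) = 0"
        using W[of "(0, x*0, 1, 0)"] V by (simp add: homothetic_tangent_def)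
      hence c: "c = 0" using r g[of a c d 0 1 0] by simp
      have "gext (B_ext l1 l2) p (a, x*a, c, d) (0, x*0, 0, 1) = 0"
        using W[of "(0, x*0, 0, 1)"] V by (simp add: homothetic_tangent_def)
      hence d: "d = 0" using r s g[of a c d 0 0 1] by simp
      show False using V a c d by (simp add: zero_prod_def)
    qed
    show "hs_timelike (gext (B_ext l1 l2)) p (homothetic_tangent x)"
      unfolding hs_timelike_def using nn
    proof (intro conjI bexI[of _ "(1, x*1, 0, 0)"])
      show "gext (B_ext l1 l2) p (1, x * 1, 0, 0) (1, x * 1, 0, 0) < 0"
        using g[of 1 0 0 1 0 0] F by simp
    qed (auto simp: homothetic_tangent_def)
  }
qed


lemma y_deriv:
  assumes d: "(r has_real_derivative - B_ext l1 l2 u (r u) / 2) (at u within S)" and u: "u > 0"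
  shows "((\<lambda>t. r t / t) has_real_derivative Fz l1 l2 (r u / u) / (2*u)) (at u within S)"
proof -
  have "((\<lambda>t. r t / t) has_real_derivative ((- B_ext l1 l2 u (r u) / 2) * u - r u * 1) / (u * u)) (at u within S)"
    using DERIV_divide[OF d DERIV_ident] u by simp
  moreover have "((- B_ext l1 l2 u (r u) / 2) * u - r u * 1) / (u * u) = Fz l1 l2 (r u / u) / (2*u)"
    using u unfolding B_ext_def Fz_def by (simp add: field_simps)
  ultimately show ?thesis by simp
qed

lemma at_deriv:
  assumes "(f has_real_derivative D) (at x within {a..})" "a < x"
  shows "(f has_real_derivative D) (at x)"
proof -
  have "(f has_real_derivative D) (at x within {a<..})"
    using assms(1) by (rule DERIV_subset) auto
  thus ?thesis using at_within_open[of x "{a<..}"] assms(2) by simp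
qed

lemma reach:
  assumes l1: "l1 \<ge> 0" and l2: "l2 > 0" and xS: "xS > 0"
    and xs: "xs > xS" and neg: "\<forall>x. xS < x \<and> x < xs \<longrightarrow> Fz l1 l2 x < 0"
    and FS: "Fz l1 l2 xS < 0"
    and u0: "u0 > 0" "xS * u0 < r u0" "r u0 < xs * u0"
    and cont: "continuous_on {u0..} r"
    and ode: "\<forall>u \<ge> u0. (\<forall>u'\<in>{u0..u}. r u' > xS * u') \<longrightarrow> ingoing_null_ode (B_ext l1 l2) r u {u0..}"
  shows "\<exists>u1>u0. r u1 = xS * u1"
proof (rule ccontr)
  assume nc: "\<not> ?thesis"
  have pos: "r u > xS * u" if uu: "u \<ge> u0" for u
  proof (rule ccontr)
    assume "\<not> r u > xS*u"
    hence le: "r u - xS*u \<le> 0" by simp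
    have "continuous_on {u0..u} (\<lambda>t. r t - xS*t)"
      by (intro continuous_intros continuous_on_subset[OF cont]) auto
    then obtain t where t: "u0 \<le> t" "t \<le> u" "r t - xS*t = 0"
      using IVT2'[of "\<lambda>t. r t - xS*t" u 0 u0] u0 uu le by auto
    have "t \<noteq> u0" using t u0 by auto
    thus False using t nc by auto
  qed
  define y where "y t = r t / t" for t
  have yd: "(y has_real_derivative Fz l1 l2 (y u) / (2*u)) (at u within {u0..})" if "u \<ge> u0" for u
  proof -
    have "ingoing_null_ode (B_ext l1 l2) r u {u0..}" using ode pos that by auto
    hence "(r has_real_derivative - B_ext l1 l2 u (r u) / 2) (at u within {u0..})"
      unfolding ingoing_null_ode_def by simp
    from y_deriv[OF this] that u0 show ?thesis unfolding y_def[abs_def] by simp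
  qed
  have ycont: "continuous_on {u0..} y" unfolding y_def using cont u0
    by (intro continuous_intros) auto
  have yS: "y u > xS" if "u \<ge> u0" for u
    using pos[OF that] that u0 unfolding y_def by (simp add: pos_less_divide_eq)
  define y0 where "y0 = y u0"
  have y0: "xS < y0" "y0 < xs" using u0 by (simp_all add: y0_def y_def field_simps)
  have ybd: "y b \<le> y0" if b: "b \<ge> u0" for b
  proof (rule ccontr)
    assume nb: "\<not> y b \<le> y0"
    define T where "T = {u0..b} \<inter> y -` {..y0}"
    have "closed T" unfolding T_def
      by (rule continuous_closed_preimage) (use continuous_on_subset[OF ycont] in auto)
    moreover have "bounded T" unfolding T_def by (rule bounded_subset[of "{u0..b}"]) auto
    ultimately have cT: "compact T" using compact_eq_bounded_closed by blast
    have "u0 \<in> T" using b by (simp add: T_def y0_def)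
    then obtain t where t: "t \<in> T" "\<forall>s\<in>T. s \<le> t"
      using continuous_attains_sup[OF cT _ continuous_on_id] by blast
    have t1: "t \<ge> u0" "t \<le> b" "y t \<le> y0" using t(1) by (auto simp: T_def)
    have "t \<noteq> b" using t1 nb by auto
    hence tb: "t < b" using t1 by simp
    have "Fz l1 l2 (y t) < 0" using neg yS[OF t1(1)] y0 t1 by auto
    hence "Fz l1 l2 (y t) / (2*t) < 0" using t1 u0 by (simp add: divide_neg_pos)
    then obtain d where d: "d > 0" "\<forall>h>0. t + h \<in> {u0..} \<longrightarrow> h < d \<longrightarrow> y t > y (t + h)"
      using has_real_derivative_neg_dec_right[OF yd[OF t1(1)]] by blast
    define h where "h = min (d/2) (b - t)"
    have h: "h > 0" "h < d" "t + h \<le> b" using d tb by (auto simp: h_def)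
    have "y (t + h) < y t" using d h t1 by auto
    hence "t + h \<in> T" using h t1 by (auto simp: T_def)
    thus False using t(2) h by fastforce
  qed
  define m where "m = - max (Fz l1 l2 xS) (Fz l1 l2 y0)"
  have m: "m > 0" using FS neg y0 by (auto simp: m_def)
  have Fm: "Fz l1 l2 (y u) \<le> -m" if "u \<ge> u0" for u
    using Fz_bound[OF l1 _ xS, of l2 "y u" y0] l2 yS[OF that] ybd[OF that] by (simp add: m_def)
  define b where "b = u0 * exp (2*(y0 - xS)/m)"
  have "exp (2*(y0 - xS)/m) > 1" using y0 m by simp
  hence b: "b > u0" using u0 unfolding b_def by simp
  define w where "w t = y t + m/2 * ln t" for t
  have "w b \<le> w u0"
  proof (rule DERIV_nonpos_imp_decreasing_open[of u0 b w])
    show "u0 \<le> b" using b by simp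
    show "continuous_on {u0..b} w" unfolding w_def using u0
      by (intro continuous_intros continuous_on_subset[OF ycont]) auto
    fix x assume x: "u0 < x" "x < b"
    have "(y has_real_derivative Fz l1 l2 (y x) / (2*x)) (at x)"
      using at_deriv[OF yd] x by simp
    hence "(w has_real_derivative Fz l1 l2 (y x) / (2*x) + m/2 * inverse x) (at x)"
      unfolding w_def[abs_def] by (rule DERIV_add[OF _ DERIV_cmult[OF DERIV_ln]]) (use x u0 in auto)
    moreover have "Fz l1 l2 (y x) / (2*x) + m/2 * inverse x \<le> 0"
    proof -
      have "Fz l1 l2 (y x) / (2*x) + m/2 * inverse x = (Fz l1 l2 (y x) + m) / (2*x)"
        using x u0 by (simp add: field_simps)
      moreover have "Fz l1 l2 (y x) + m \<le> 0" using Fm[of x] x by simp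
      ultimately show ?thesis using x u0 by (simp add: divide_nonpos_pos)
    qed
    ultimately show "\<exists>y. (w has_real_derivative y) (at x) \<and> y \<le> 0" by blast
  qed
  moreover have "ln b = ln u0 + 2*(y0 - xS)/m" using u0 unfolding b_def by (simp add: ln_mult)
  ultimately have "y b \<le> xS" unfolding w_def using m by (simp add: y0_def[symmetric] field_simps)
  thus False using yS[of b] b by simp
qed


lemma escape:
  assumes l1: "l1 \<ge> 0" and l2: "l2 > 0" and xS: "xS > 0"
    and xs: "xs > xS" and neg: "\<forall>x. xS < x \<and> x < xs \<longrightarrow> Fz l1 l2 x < 0"
    and FS: "Fz l1 l2 xS < 0" and F0: "Fz l1 l2 xs = 0" and posF: "\<forall>x>xs. Fz l1 l2 x > 0"
    and r: "\<forall>u>0. ingoing_null_ode (B_ext l1 l2) r u UNIV \<and> r u > xS*u"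
    and ex: "\<exists>u>0. r u \<noteq> xs*u"
  shows "\<forall>u>0. r u > xs*u"
proof (rule ccontr)
  assume nc: "\<not> ?thesis"
  have rd: "(r has_real_derivative - B_ext l1 l2 u (r u) / 2) (at u)" if "u > 0" for u
    using r that unfolding ingoing_null_ode_def by auto
  define y where "y t = r t / t" for t
  have yd: "(y has_real_derivative Fz l1 l2 (y u) / (2*u)) (at u)" if "u > 0" for u
    using y_deriv[OF rd[OF that] that] unfolding y_def[abs_def] by simp
  have ycont: "continuous_on {a..b} y" if "a > 0" for a b
    using that by (auto intro!: continuous_at_imp_continuous_on DERIV_isCont[OF yd])
  have rcont: "continuous_on {a..} r" if "a > 0" for a
    using that by (auto intro!: continuous_at_imp_continuous_on DERIV_isCont[OF rd])
  have ge: "y u \<ge> xs" if u: "u > 0" for u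
  proof (rule ccontr)
    assume "\<not> y u \<ge> xs"
    hence "r u < xs * u" using u unfolding y_def by (simp add: le_divide_eq mult.commute)
    moreover have "xS * u < r u" using r u by simp
    moreover have "\<forall>v \<ge> u. (\<forall>u'\<in>{u..v}. r u' > xS * u') \<longrightarrow> ingoing_null_ode (B_ext l1 l2) r v {u..}"
      using rd u unfolding ingoing_null_ode_def by (auto intro: has_field_derivative_at_within)
    ultimately obtain u1 where "u1 > u" and "r u1 = xS * u1"
      using reach[OF l1 l2 xS xs neg FS u _ _ rcont[OF u]] by blast
    moreover have "xS * u1 < r u1" using r u \<open>u1 > u\<close> by simp
    ultimately show False by simp
  qed
  have Fnn: "Fz l1 l2 (y u) \<ge> 0" if "u > 0" for u
    using ge[OF that] F0 posF by (metis order.order_iff_strict less_imp_le)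
  obtain u1 where u1: "u1 > 0" "y u1 = xs"
  proof -
    obtain u1 where "u1 > 0" "\<not> xs * u1 < r u1" using nc by blast
    moreover hence "y u1 \<le> xs" unfolding y_def by (simp add: divide_le_eq mult.commute)
    ultimately show ?thesis using that ge by force
  qed
  obtain u2 where u2: "u2 > 0" "y u2 > xs"
  proof -
    obtain u2 where "u2 > 0" "r u2 \<noteq> xs * u2" using ex by blast
    moreover hence "y u2 \<noteq> xs" unfolding y_def by (auto simp: field_simps)
    ultimately show ?thesis using that ge by force
  qed
  have "u1 \<noteq> u2" using u1 u2 by auto
  moreover have "\<not> u2 < u1"
  proof
    assume lt: "u2 < u1"
    have "y u2 \<le> y u1"
    proof (rule DERIV_nonneg_imp_increasing_open[of u2 u1 y])
      show "u2 \<le> u1" using lt by simp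
      show "continuous_on {u2..u1} y" using ycont u2 by simp
      fix x assume x: "u2 < x" "x < u1"
      hence "x > 0" using u2 by simp
      thus "\<exists>d. (y has_real_derivative d) (at x) \<and> d \<ge> 0"
        using yd Fnn by (intro exI[of _ "Fz l1 l2 (y x) / (2*x)"]) auto
    qed
    thus False using u1 u2 by simp
  qed
  ultimately have lt: "u1 < u2" by simp
  obtain s where s: "s \<in> {u1..u2}" "\<forall>t\<in>{u1..u2}. y t \<le> y s"
    using continuous_attains_sup[OF compact_Icc _ ycont[OF u1(1)], of u2] lt by auto
  define Y where "Y = y s"
  have "y u2 \<le> Y" using s lt by (auto simp: Y_def)
  hence Y1: "Y > xs" using u2 by linarith
  have Y: "Y > xs" "\<forall>t\<in>{u1..u2}. y t \<le> Y" using Y1 s by (auto simp: Y_def)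
  define L where "L = Fz l1 l2 Y / (Y - xs)"
  have Lb: "Fz l1 l2 (y t) \<le> L * (y t - xs)" if t: "t \<in> {u1..u2}" for t
  proof -
    have t0: "t > 0" using t u1 by simp
    have yt: "xs \<le> y t" "y t \<le> Y" using ge[OF t0] Y t by auto
    show ?thesis
    proof (cases "y t = xs \<or> y t = Y")
      case True thus ?thesis using F0 Y by (auto simp: L_def)
    next
      case False
      hence yt': "xs < y t" "y t < Y" using yt by auto
      have "(Y - xs) * Fz l1 l2 (y t) \<le> (Y - y t) * Fz l1 l2 xs + (y t - xs) * Fz l1 l2 Y"
        using Fz_conv[OF l1 _ _ yt'] l2 xs xS by simp
      hence "(Y - xs) * Fz l1 l2 (y t) \<le> (y t - xs) * Fz l1 l2 Y" using F0 by simp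
      hence "Fz l1 l2 (y t) \<le> (y t - xs) * Fz l1 l2 Y / (Y - xs)"
        using Y by (simp add: le_divide_eq mult.commute)
      thus ?thesis by (simp add: L_def mult.commute)
    qed
  qed
  define z where "z t = (y t - xs) * exp (-(L/2) * ln t)" for t
  have "z u2 \<le> z u1"
  proof (rule DERIV_nonpos_imp_decreasing_open[of u1 u2 z])
    show "u1 \<le> u2" using lt by simp
    show "continuous_on {u1..u2} z" unfolding z_def using u1
      by (intro continuous_intros ycont) auto
    fix x assume x: "u1 < x" "x < u2"
    hence x0: "x > 0" using u1 by simp
    define E where "E = exp (-(L/2) * ln x)"
    have E: "E > 0" by (simp add: E_def)
    have "(z has_real_derivative (Fz l1 l2 (y x) / (2*x) - 0) * E + (E * (-(L/2) * inverse x)) * (y x - xs)) (at x)"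
      unfolding z_def E_def
      by (rule DERIV_mult[OF DERIV_diff[OF yd[OF x0] DERIV_const] DERIV_fun_exp[OF DERIV_cmult[OF DERIV_ln[OF x0]]]])
    moreover have "(Fz l1 l2 (y x) / (2*x) - 0) * E + (E * (-(L/2) * inverse x)) * (y x - xs)
        = E / (2*x) * (Fz l1 l2 (y x) - L * (y x - xs))"
      using x0 by (simp add: field_simps)
    moreover have "E / (2*x) * (Fz l1 l2 (y x) - L * (y x - xs)) \<le> 0"
      using Lb[of x] x E x0 by (intro mult_nonneg_nonpos) auto
    ultimately show "\<exists>d. (z has_real_derivative d) (at x) \<and> d \<le> 0" by auto
  qed
  moreover have "z u1 = 0" using u1 by (simp add: z_def)
  moreover have "z u2 > 0" using u2 by (simp add: z_def)
  ultimately show False by simp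
qed

theorem mainTheorem5:
  fixes k :: int and \<beta> \<delta> Rb :: real
  assumes hk: "k \<in> {-1, 0, 1}"
    and h\<beta>: "\<beta> > 0"
    and h\<delta>: "\<delta> > 0" "\<delta> ^ 3 + real_of_int k * \<delta> - 3 * \<beta> / 2 = 0"
    and hRb: "Rb > 0" "k = 1 \<longrightarrow> Rb < 1"
  defines "xS \<equiv> x_Sigma (real_of_int k) \<delta> Rb"
    and "l1 \<equiv> lambda1 (real_of_int k) \<beta> \<delta> Rb"
    and "l2 \<equiv> lambda2 (real_of_int k) \<beta> \<delta> Rb"
  shows "\<exists>xs > xS.
     (\<forall>x > xs. \<forall>p \<in> homothetic_points x.
         hs_spacelike (gext (B_ext l1 l2)) p (homothetic_tangent x))
   \<and> (\<forall>p \<in> homothetic_points xs.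
         hs_null (gext (B_ext l1 l2)) p (homothetic_tangent xs))
   \<and> (\<forall>x. xS < x \<and> x < xs \<longrightarrow> (\<forall>p \<in> homothetic_points x.
         hs_timelike (gext (B_ext l1 l2)) p (homothetic_tangent x)))
   \<and> (Rb < R_AH (real_of_int k) \<delta> \<longrightarrow>
         (\<forall>xAH. xAH > xS \<and> hfun l1 l2 xAH = 0 \<longrightarrow> xs > xAH))
   \<and> (\<forall>u > 0. ingoing_null_ode (B_ext l1 l2) (\<lambda>u. xs * u) u UNIV)
   \<and> (\<forall>r u0. u0 > 0 \<and> xS * u0 < r u0 \<and> r u0 < xs * u0
        \<and> continuous_on {u0..} r
        \<and> (\<forall>u \<ge> u0. (\<forall>u' \<in> {u0..u}. r u' > xS * u') \<longrightarrow>
              ingoing_null_ode (B_ext l1 l2) r u {u0..})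
        \<longrightarrow> (\<exists>u1 > u0. r u1 = xS * u1))
   \<and> (\<forall>r. (\<forall>u > 0. ingoing_null_ode (B_ext l1 l2) r u UNIV \<and> r u > xS * u)
        \<and> filterlim r at_top at_top
        \<and> (\<exists>u > 0. r u \<noteq> xs * u)
        \<longrightarrow> (\<forall>u > 0. r u > xs * u))"
proof -
  define K where "K = real_of_int k"
  have q: "1 - K * Rb\<^sup>2 > 0"
  proof -
    consider "k = -1" | "k = 0" | "k = 1" using hk by auto
    thus ?thesis
    proof cases
      case 1 thus ?thesis by (simp add: K_def) (smt (verit) zero_le_power2)
    next
      case 2 thus ?thesis by (simp add: K_def)
    next
      case 3
      hence "Rb < 1" using hRb by simp
      hence "Rb\<^sup>2 < 1" using hRb by (simp add: power_less_one_iff)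
      thus ?thesis using 3 by (simp add: K_def)
    qed
  qed
  define s where "s = sqrt (1 - K * Rb\<^sup>2)"
  have s: "s > 0" "s\<^sup>2 = 1 - K * Rb\<^sup>2" using q by (simp_all add: s_def)
  define D where "D = s + \<delta> * Rb"
  have "\<delta> * Rb > 0" using h\<delta> hRb by simp
  hence D: "D > 0" using s unfolding D_def by linarith
  have Ck: "C_k K \<delta> Rb = 1 / D" by (simp add: C_k_def D_def s_def)
  have xSv: "xS = Rb * \<delta> * D" using D by (simp add: xS_def x_Sigma_def Ck K_def[symmetric])
  have l1v: "l1 = \<beta> * Rb ^ 3 * D" using D by (simp add: l1_def lambda1_def Ck K_def[symmetric])
  have l2v: "l2 = \<beta> / (2 * \<delta> ^ 3 * D\<^sup>2)" using D by (simp add: l2_def lambda2_def Ck K_def[symmetric] power_divide)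
  have xS0: "xS > 0" using xSv D h\<delta> hRb by simp
  have l10: "l1 \<ge> 0" using l1v D h\<beta> hRb by simp
  have l20: "l2 > 0" using l2v D h\<beta> h\<delta> by simp
  have e1: "l1 / xS = \<beta> * Rb\<^sup>2 / \<delta>" using xSv l1v D h\<delta> hRb by (simp add: field_simps power2_eq_square power3_eq_cube)
  have e2: "l2 * xS\<^sup>2 = \<beta> * Rb\<^sup>2 / (2 * \<delta>)" using xSv l2v D h\<delta> hRb by (simp add: field_simps power2_eq_square power3_eq_cube)
  have \<beta>v: "\<beta> = 2 * (\<delta> ^ 3 + K * \<delta>) / 3" using h\<delta>(2) by (simp add: K_def field_simps)
  have e3: "l1 / xS + l2 * xS\<^sup>2 = Rb\<^sup>2 * (\<delta>\<^sup>2 + K)"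
    unfolding e1 e2 \<beta>v using h\<delta> by (simp add: field_simps power2_eq_square power3_eq_cube)
  have FS: "Fz l1 l2 xS < 0"
  proof -
    have "Fz l1 l2 xS = -1 + (l1 / xS + l2 * xS\<^sup>2) - 2 * xS" by (simp add: Fz_def hfun_def)
    also have "\<dots> = -1 + Rb\<^sup>2 * (\<delta>\<^sup>2 + K) - 2 * xS" by (simp only: e3)
    also have "\<dots> = - D\<^sup>2" unfolding xSv D_def using s(2)
      by (simp add: power2_eq_square algebra_simps)
    finally show ?thesis using D by simp
  qed
  obtain xs where xs: "xs > xS" "Fz l1 l2 xs = 0" "\<forall>x>xs. Fz l1 l2 x > 0"
    "\<forall>x. xS < x \<and> x < xs \<longrightarrow> Fz l1 l2 x < 0"
    using Fz_root[OF l10 l20 xS0 FS] by blast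
  show ?thesis
  proof (intro exI[of _ xs] conjI)
    show "xs > xS" by fact
  next
    show "\<forall>x > xs. \<forall>p \<in> homothetic_points x.
         hs_spacelike (gext (B_ext l1 l2)) p (homothetic_tangent x)"
      using causal(1)[of _ _ l1 l2] xs xS0 by (meson less_trans)
  next
    show "\<forall>p \<in> homothetic_points xs.
         hs_null (gext (B_ext l1 l2)) p (homothetic_tangent xs)"
      using causal(2)[of xs _ l1 l2] xs xS0 by auto
  next
    show "\<forall>x. xS < x \<and> x < xs \<longrightarrow> (\<forall>p \<in> homothetic_points x.
         hs_timelike (gext (B_ext l1 l2)) p (homothetic_tangent x))"
      using causal(3)[of _ _ l1 l2] xs xS0 by (meson less_trans)
  next
    show "Rb < R_AH (real_of_int k) \<delta> \<longrightarrow>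
         (\<forall>xAH. xAH > xS \<and> hfun l1 l2 xAH = 0 \<longrightarrow> xs > xAH)"
    proof (intro impI allI)
      fix xAH assume "xAH > xS \<and> hfun l1 l2 xAH = 0"
      hence a: "xS < xAH" "hfun l1 l2 xAH = 0" by auto
      hence "Fz l1 l2 xAH < 0" using xS0 by (simp add: Fz_def)
      thus "xs > xAH" using xs(2,3) by (metis less_irrefl not_less_iff_gr_or_eq)
    qed
  next
    show "\<forall>u > 0. ingoing_null_ode (B_ext l1 l2) (\<lambda>u. xs * u) u UNIV"
    proof (intro allI impI)
      fix u :: real assume u: "u > 0"
      have "xs = - B_ext l1 l2 u (xs * u) / 2" using u xs(2) by (simp add: B_ext_def Fz_def)
      moreover have "((\<lambda>u. xs * u) has_real_derivative xs) (at u)"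
        using DERIV_cmult[OF DERIV_ident, of xs] by simp
      ultimately show "ingoing_null_ode (B_ext l1 l2) (\<lambda>u. xs * u) u UNIV"
        unfolding ingoing_null_ode_def by simp
    qed
  next
    show "\<forall>r u0. u0 > 0 \<and> xS * u0 < r u0 \<and> r u0 < xs * u0
        \<and> continuous_on {u0..} r
        \<and> (\<forall>u \<ge> u0. (\<forall>u' \<in> {u0..u}. r u' > xS * u') \<longrightarrow>
              ingoing_null_ode (B_ext l1 l2) r u {u0..})
        \<longrightarrow> (\<exists>u1 > u0. r u1 = xS * u1)"
      using reach[OF l10 l20 xS0 xs(1) xs(4) FS] by blast
  next
    show "\<forall>r. (\<forall>u > 0. ingoing_null_ode (B_ext l1 l2) r u UNIV \<and> r u > xS * u)
        \<and> filterlim r at_top at_top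
        \<and> (\<exists>u > 0. r u \<noteq> xs * u)
        \<longrightarrow> (\<forall>u > 0. r u > xs * u)"
      using escape[OF l10 l20 xS0 xs(1) xs(4) FS xs(2) xs(3)] by blast
  qed
qed

end
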